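(* Let $A=[a_{ij}]\in\{0,1\}^{N\times N}$ be the adjacency matrix of a static contact graph on nodes $\{1,\dots,N\}$ (with $a_{ii}=0$) and let $\rho(A)$ be its spectral radius. Let $\beta_0>0$, $\delta>0$, $\kappa>0$ and $0\le\beta_a<\beta_0$, and consider the SAIS system \[ \dot p_i=\beta_0(1-p_i-q_i)\sum_{j=1}^N a_{ij}p_j+\beta_a q_i\sum_{j=1}^N a_{ij}p_j-\delta p_i,\qquad \dot q_i=\kappa(1-p_i-q_i)\sum_{j=1}^N a_{ij}p_j-\beta_a q_i\sum_{j=1}^N a_{ij}p_j, \] $i\in\{1,\dots,N\}$, with initial data that are probabilities ($p_i,q_i\ge0$, $p_i+q_i\le 1$). If the infection strength satisfies \[ \tau=\frac{\beta_0}{\delta}<\frac{1}{\rho(A)}, \] then initial infections die out exponentially, i.e. each $p_i(t)$ converges to $0$ exponentially as $t\to\infty$.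
   Context: $p_i$ and $q_i$ are the (mean-field) probabilities that individual $i$ is infected and alert; $a_{ij}=1$ iff individual $j$ is a neighbor of individual $i$. $\beta_0$: infection rate of susceptible individuals; $\beta_a$: infection rate of alert individuals; $\kappa$: alerting rate; $\delta$: curing rate. $\rho(A)$ is the largest modulus of the eigenvalues of $A$. *)

theory Defs
  imports Complex_Main "Jordan_Normal_Form.Spectral_Radius"
begin

definition adjacency_matrix :: "nat \<Rightarrow> real mat \<Rightarrow> bool" where
  "adjacency_matrix N A \<longleftrightarrow> A \<in> carrier_mat N N \<and>
     (\<forall>i<N. \<forall>j<N. A $$ (i,j) = 0 \<or> A $$ (i,j) = 1) \<and> (\<forall>i<N. A $$ (i,i) = 0)"

definition rho :: "real mat \<Rightarrow> real" where
  "rho A = spectral_radius (map_mat complex_of_real A)"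

end

theory Submission
  imports Defs
begin


lemma spec_scale:
  fixes A :: "real mat" and s :: real
  assumes A: "A \<in> carrier_mat n n" and n: "n > 0" and s: "s > 0"
  shows "spectral_radius (map_mat (\<lambda>x. complex_of_real (x / s)) A) \<le> rho A / s"
proof -
  let ?B = "map_mat complex_of_real A"
  let ?C = "map_mat (\<lambda>x. complex_of_real (x / s)) A"
  have B: "?B \<in> carrier_mat n n" and C: "?C \<in> carrier_mat n n" using A by auto
  obtain ev where ev: "ev \<in> spectrum ?C" and eq: "spectral_radius ?C = norm ev"
    using spectral_radius_mem_max(1)[OF C n] by auto
  from ev obtain v where v: "eigenvector ?C v ev" unfolding spectrum_def eigenvalue_def by auto
  hence vc: "v \<in> carrier_vec n" and v0: "v \<noteq> 0\<^sub>v n" and ve: "?C *\<^sub>v v = ev \<cdot>\<^sub>v v"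
    unfolding eigenvector_def using C by auto
  have "?B *\<^sub>v v = (complex_of_real s * ev) \<cdot>\<^sub>v v"
  proof (rule eq_vecI)
    fix i assume i: "i < dim_vec ((complex_of_real s * ev) \<cdot>\<^sub>v v)"
    hence i': "i < n" using vc by auto
    have "(?C *\<^sub>v v) $ i = (ev \<cdot>\<^sub>v v) $ i" using ve by simp
    hence e1: "(\<Sum>l<n. complex_of_real (A $$ (i,l) / s) * v $ l) = ev * v $ i"
      using i' A vc by (auto simp: scalar_prod_def lessThan_atLeast0)
    have "(?B *\<^sub>v v) $ i = (\<Sum>l<n. complex_of_real (A $$ (i,l)) * v $ l)"
      using i' A vc by (auto simp: scalar_prod_def lessThan_atLeast0)
    also have "\<dots> = complex_of_real s * (\<Sum>l<n. complex_of_real (A $$ (i,l) / s) * v $ l)"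
      using s by (simp add: sum_distrib_left field_simps)
    also have "\<dots> = ((complex_of_real s * ev) \<cdot>\<^sub>v v) $ i" using e1 i' vc by simp
    finally show "(?B *\<^sub>v v) $ i = ((complex_of_real s * ev) \<cdot>\<^sub>v v) $ i" .
  qed (use vc A in auto)
  hence "eigenvector ?B v (complex_of_real s * ev)" unfolding eigenvector_def using vc v0 A by auto
  hence "complex_of_real s * ev \<in> spectrum ?B" unfolding spectrum_def eigenvalue_def by auto
  hence "norm (complex_of_real s * ev) \<le> rho A"
    unfolding rho_def by (intro spectral_radius_mem_max(2)[OF B n]) auto
  hence "s * norm ev \<le> rho A" using s by (simp add: norm_mult)
  thus ?thesis using eq s by (simp add: field_simps)
qed



lemma lyap_vec:
  fixes A :: "real mat"
  assumes adj: "adjacency_matrix N A" and n: "N > 0" and r: "rho A < s'" and s's: "s' < s" and s'0: "0 < s'"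
  shows "\<exists>v. (\<forall>j<N. v j \<ge> 1) \<and> (\<forall>j<N. (\<Sum>i<N. v i * A $$ (i,j)) \<le> s * v j)"
proof -
  have A: "A \<in> carrier_mat N N" and A01: "\<And>i j. i<N \<Longrightarrow> j<N \<Longrightarrow> A $$ (i,j) = 0 \<or> A $$ (i,j) = 1"
    using adj unfolding adjacency_matrix_def by auto
  have Ann: "\<And>i j. i<N \<Longrightarrow> j<N \<Longrightarrow> A $$ (i,j) \<ge> 0" using A01 by force
  define M where "M = map_mat (\<lambda>x. x / s') A"
  have M: "M \<in> carrier_mat N N" using A M_def by auto
  have CM: "map_mat complex_of_real M = map_mat (\<lambda>x. complex_of_real (x / s')) A"
    unfolding M_def by (rule eq_matI) auto
  have "spectral_radius (map_mat complex_of_real M) < 1"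
  proof -
    have "spectral_radius (map_mat (\<lambda>x. complex_of_real (x / s')) A) \<le> rho A / s'"
      by (rule spec_scale[OF A n s'0])
    also have "\<dots> < 1" using r s'0 by simp
    finally show ?thesis using CM by simp
  qed
  from spectral_radius_jnf_norm_bound_less_1_upper_triangular[OF _ this] M
  obtain c where c: "\<And>k. norm_bound (map_mat complex_of_real M ^\<^sub>m k) c" by fastforce
  have dM: "dim_row M = N" "dim_col M = N" using M by auto
  have Mpc: "\<And>k. M ^\<^sub>m k \<in> carrier_mat N N" using M by auto
  have bnd: "\<bar>(M ^\<^sub>m k) $$ (i,j)\<bar> \<le> c" if "i < N" "j < N" for i j k
  proof -
    have "map_mat complex_of_real (M ^\<^sub>m k) = map_mat complex_of_real M ^\<^sub>m k"
      by (rule of_real_hom.mat_hom_pow[OF M])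
    hence "norm ((map_mat complex_of_real (M ^\<^sub>m k)) $$ (i,j)) \<le> c"
      using c[of k] that Mpc[of k] dM unfolding norm_bound_def by (auto split: if_splits)
    moreover have "dim_row (M ^\<^sub>m k) = N" "dim_col (M ^\<^sub>m k) = N" using Mpc[of k] by auto
    ultimately show ?thesis using that by (simp add: norm_of_real)
  qed
  have step: "(M ^\<^sub>m Suc k) $$ (i,j) = (\<Sum>l<N. (M ^\<^sub>m k) $$ (i,l) * (A $$ (l,j) / s'))"
    if "i < N" "j < N" for i j k
    using that Mpc[of k] M A unfolding M_def
    by (auto simp: scalar_prod_def lessThan_atLeast0 intro!: sum.cong)
  have nn: "(M ^\<^sub>m k) $$ (i,j) \<ge> 0" if "i < N" "j < N" for i j k
    using that
  proof (induction k arbitrary: j)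
    case 0 thus ?case using dM by auto
  next
    case (Suc k) thus ?case using step[OF Suc.prems] Ann s'0
      by (auto intro!: sum_nonneg mult_nonneg_nonneg divide_nonneg_pos)
  qed
  define r where "r = s' / s"
  have r0: "0 < r" "r < 1" using s's s'0 unfolding r_def by auto
  define T where "T k j = r ^ k * (\<Sum>i<N. (M ^\<^sub>m k) $$ (i,j))" for k j
  have Tnn: "T k j \<ge> 0" if "j < N" for k j
    unfolding T_def using r0 nn that by (intro mult_nonneg_nonneg sum_nonneg) auto
  have T0: "T 0 j = 1" if "j < N" for j
  proof -
    have "(\<Sum>i<N. (M ^\<^sub>m 0) $$ (i,j)) = (\<Sum>i<N. if i = j then 1 else 0)"
      using that dM by (intro sum.cong) auto
    also have "\<dots> = 1" using that by simp
    finally show ?thesis unfolding T_def by simp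
  qed
  have Trel: "(\<Sum>l<N. T k l * A $$ (l,j)) = s * T (Suc k) j" if j: "j < N" for k j
  proof -
    have "(\<Sum>l<N. T k l * A $$ (l,j)) = r ^ k * s' * (\<Sum>l<N. \<Sum>i<N. (M ^\<^sub>m k) $$ (i,l) * (A $$ (l,j) / s'))"
      unfolding T_def using s'0 by (simp add: sum_distrib_left sum_distrib_right field_simps)
    also have "\<dots> = r ^ k * s' * (\<Sum>i<N. \<Sum>l<N. (M ^\<^sub>m k) $$ (i,l) * (A $$ (l,j) / s'))"
      by (subst sum.swap) simp
    also have "\<dots> = r ^ k * s' * (\<Sum>i<N. (M ^\<^sub>m Suc k) $$ (i,j))"
      using step j by simp
    also have "\<dots> = s * T (Suc k) j" unfolding T_def r_def using s's s'0 by (simp add: field_simps)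
    finally show ?thesis .
  qed
  have Tb: "T k j \<le> r ^ k * (N * c)" if "j < N" for k j
  proof -
    have "(\<Sum>i<N. (M ^\<^sub>m k) $$ (i,j)) \<le> (\<Sum>i<N. c)"
      using bnd that by (intro sum_mono) (auto simp: abs_le_iff)
    thus ?thesis unfolding T_def using r0 by (auto intro!: mult_left_mono)
  qed
  obtain K where K: "r ^ K < 1 / (N * \<bar>c\<bar> + 1)"
  proof -
    have "0 < real N * \<bar>c\<bar> + 1" by (smt (verit) abs_ge_zero of_nat_0_le_iff zero_le_mult_iff)
    thus ?thesis using that real_arch_pow_inv[of "1 / (N * \<bar>c\<bar> + 1)" r] r0 by auto
  qed
  have TK: "T (Suc K) j \<le> 1" if "j < N" for j
  proof -
    have "T (Suc K) j \<le> r ^ Suc K * (N * c)" by (rule Tb[OF that])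
    also have "\<dots> \<le> r ^ K * (N * \<bar>c\<bar> + 1)"
    proof -
      have "r ^ Suc K \<le> r ^ K" using r0 by (simp add: power_Suc2 mult_left_le)
      moreover have "N * c \<le> N * \<bar>c\<bar> + 1" 
      proof -
        have "real N * c \<le> real N * \<bar>c\<bar>" by (rule mult_left_mono) auto
        thus ?thesis by linarith
      qed
      moreover have "0 \<le> real N * \<bar>c\<bar> + 1" by (smt (verit) abs_ge_zero of_nat_0_le_iff zero_le_mult_iff)
      ultimately show ?thesis using r0
        by (meson mult_left_mono mult_right_mono order_trans zero_le_power less_imp_le)
    qed
    also have "\<dots> \<le> 1" using K by (simp add: field_simps add_pos_nonneg)
    finally show ?thesis .
  qed
  define v where "v j = (\<Sum>k\<le>K. T k j)" for j
  show ?thesis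
  proof (intro exI[of _ v] conjI allI impI)
    fix j assume j: "j < N"
    have "T 0 j \<le> v j" unfolding v_def using Tnn[OF j]
      by (intro member_le_sum) auto
    thus "1 \<le> v j" using T0[OF j] by simp
    have "(\<Sum>i<N. v i * A $$ (i,j)) = (\<Sum>k\<le>K. \<Sum>l<N. T k l * A $$ (l,j))"
      unfolding v_def by (simp add: sum_distrib_right sum.swap[of _ "{..<N}"])
    also have "\<dots> = s * (\<Sum>k\<le>K. T (Suc k) j)" using Trel[OF j] by (simp add: sum_distrib_left)
    also have "(\<Sum>k\<le>K. T (Suc k) j) = v j + T (Suc K) j - T 0 j"
      unfolding v_def by (induction K) auto
    finally have fe: "(\<Sum>i<N. v i * A $$ (i,j)) = s * (v j + T (Suc K) j - T 0 j)" .
    show "(\<Sum>i<N. v i * A $$ (i,j)) \<le> s * v j"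
    proof -
      have "s * T (Suc K) j \<le> s" using TK[OF j] s's s'0 by (simp add: mult_left_le)
      thus ?thesis using fe T0[OF j] by (simp add: algebra_simps)
    qed
  qed
qed



lemma deriv_at0:
  assumes "t > 0" "(f has_real_derivative D) (at t within {0..})"
  shows "(f has_real_derivative D) (at t)"
proof -
  have "at t within {0..} = at t" by (rule at_within_open_subset[of t "{0<..}"]) (use assms in auto)
  thus ?thesis using assms by simp
qed

lemma mvt0:
  fixes f f' :: "real \<Rightarrow> real"
  assumes a: "0 \<le> a" "a < b" and der: "\<forall>t\<ge>0. (f has_real_derivative f' t) (at t within {0..})"
  shows "\<exists>z. a < z \<and> z < b \<and> f b - f a = (b - a) * f' z"
proof -
  have c: "continuous_on {0..} f" using der by (intro DERIV_continuous_on) auto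
  have "continuous_on {a..b} f" by (rule continuous_on_subset[OF c]) (use a in auto)
  moreover have "\<And>x. a < x \<Longrightarrow> x < b \<Longrightarrow> f differentiable (at x)"
    using der a deriv_at0 by (meson less_eq_real_def order_le_less_trans real_differentiable_def)
  ultimately obtain l z where z: "a < z" "z < b" "DERIV f z :> l" "f b - f a = (b - a) * l"
    using MVT[OF a(2)] by blast
  have "DERIV f z :> f' z" using der z a deriv_at0 by force
  with z(3) have "l = f' z" by (rule DERIV_unique)
  thus ?thesis using z by auto
qed

lemma neg_nbhd:
  fixes f :: "real \<Rightarrow> real"
  assumes c: "continuous_on {0..} f" and t: "t \<ge> 0" and neg: "f t < 0"
  shows "\<exists>d>0. \<forall>u\<ge>0. \<bar>u - t\<bar> < d \<longrightarrow> f u < 0"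
proof -
  have "(f \<longlongrightarrow> f t) (at t within {0..})"
    using c t unfolding continuous_on_def by auto
  hence "eventually (\<lambda>u. f u < 0) (at t within {0..})"
    using neg by (rule order_tendstoD(2))
  then obtain d where d: "d > 0" "\<forall>u\<in>{0..}. u \<noteq> t \<and> dist u t < d \<longrightarrow> f u < 0"
    unfolding eventually_at by auto
  show ?thesis
  proof (intro exI[of _ d] conjI allI impI)
    fix u :: real assume "u \<ge> 0" "\<bar>u - t\<bar> < d"
    thus "f u < 0" using d neg by (cases "u = t") (auto simp: dist_real_def)
  qed (use d in auto)
qed

lemma nonneg_invariant:
  fixes x x' :: "'a \<Rightarrow> real \<Rightarrow> real" and I :: "'a set"
  assumes fin: "finite I"
    and der: "\<forall>k\<in>I. \<forall>t\<ge>0. (x k has_real_derivative x' k t) (at t within {0..})"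
    and init: "\<forall>k\<in>I. x k 0 \<ge> 0"
    and bnd: "\<forall>T\<ge>0. \<exists>L\<ge>0. \<forall>t. 0 \<le> t \<longrightarrow> t \<le> T \<longrightarrow>
               (\<forall>k\<in>I. x k t < 0 \<longrightarrow> x' k t \<ge> - L * (\<Sum>l\<in>I. max 0 (- x l t)))"
  shows "\<forall>k\<in>I. \<forall>t\<ge>0. x k t \<ge> 0"
proof (rule ccontr)
  assume "\<not> ?thesis"
  then obtain k1 T where k1: "k1 \<in> I" "T \<ge> 0" "x k1 T < 0" by force
  from bnd k1(2) obtain L where L: "L \<ge> 0" "\<forall>t. 0 \<le> t \<longrightarrow> t \<le> T \<longrightarrow>
               (\<forall>k\<in>I. x k t < 0 \<longrightarrow> x' k t \<ge> - L * (\<Sum>l\<in>I. max 0 (- x l t)))" by blast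
  have cont: "continuous_on {0..} (x k)" if "k \<in> I" for k
    using der that by (intro DERIV_continuous_on) auto
  define G where "G = {u. 0 \<le> u \<and> u \<le> T \<and> (\<forall>w. 0 \<le> w \<and> w \<le> u \<longrightarrow> (\<forall>k\<in>I. x k w \<ge> 0))}"
  have G0: "0 \<in> G" using init k1 unfolding G_def by auto
  have Gb: "bdd_above G" unfolding G_def by (intro bdd_aboveI[of _ T]) auto
  define t0 where "t0 = Sup G"
  have t00: "0 \<le> t0" unfolding t0_def using G0 Gb by (rule cSup_upper)
  have t0T: "t0 \<le> T" unfolding t0_def using G0 by (intro cSup_least) (auto simp: G_def)
  have clA: "\<forall>k\<in>I. x k w \<ge> 0" if w: "0 \<le> w" "w < t0" for w
  proof -
    obtain u where "u \<in> G" "w < u" using less_cSupD[of G w] G0 w by (auto simp: t0_def)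
    thus ?thesis using w unfolding G_def by auto
  qed
  have clB: "x k t0 \<ge> 0" if k: "k \<in> I" for k
  proof (rule ccontr)
    assume "\<not> ?thesis"
    then obtain d where d: "d > 0" "\<forall>u\<ge>0. \<bar>u - t0\<bar> < d \<longrightarrow> x k u < 0"
      using neg_nbhd[OF cont[OF k] t00] by force
    show False
    proof (cases "t0 = 0")
      case True thus False using init k d by force
    next
      case False
      define w where "w = max 0 (t0 - d/2)"
      have "0 \<le> w" "w < t0" "\<bar>w - t0\<bar> < d" using False t00 d unfolding w_def by auto
      thus False using clA[of w] d k by force
    qed
  qed
  have t0lt: "t0 < T"
  proof (rule ccontr)
    assume "\<not> t0 < T"
    hence "t0 = T" using t0T by simp
    thus False using clB[OF k1(1)] k1(3) by simp
  qed
  define c where "c = real (card I)"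
  have c0: "c \<ge> 0" unfolding c_def by simp
  define h where "h = min (1 / (2 * (c * L + 1))) (T - t0)"
  have cL0: "c * L \<ge> 0" using c0 L by simp
  have h0: "h > 0" unfolding h_def using t0lt cL0 by (auto simp: add_pos_nonneg)
  have hT: "t0 + h \<le> T" unfolding h_def by auto
  have chL: "c * L * h \<le> 1/2"
  proof -
    have "h \<le> 1 / (2 * (c * L + 1))" unfolding h_def by simp
    hence "c * L * h \<le> c * L * (1 / (2 * (c * L + 1)))" using cL0 by (rule mult_left_mono)
    also have "\<dots> \<le> 1/2" using cL0 by (simp add: field_simps)
    finally show ?thesis .
  qed
  define J where "J = {t0..t0+h}"
  define m where "m t = (\<Sum>l\<in>I. max 0 (- x l t))" for t
  have mcont: "continuous_on J m"
  proof -
    have "continuous_on J (x l)" if "l \<in> I" for l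
      unfolding J_def by (rule continuous_on_subset[OF cont[OF that]]) (use t00 in auto)
    thus ?thesis unfolding m_def by (intro continuous_intros) auto
  qed
  obtain tm where tm: "tm \<in> J" "\<forall>t\<in>J. m t \<le> m tm"
    using continuous_attains_sup[OF _ _ mcont] h0 unfolding J_def by fastforce
  define Mx where "Mx = m tm"
  have Mx0: "Mx \<ge> 0" unfolding Mx_def m_def by (intro sum_nonneg) auto
  have core: "- x k t \<le> L * h * Mx" if t: "t \<in> J" and k: "k \<in> I" and neg: "x k t < 0" for t k
  proof -
    define S where "S = {u. t0 \<le> u \<and> u \<le> t \<and> x k u \<ge> 0}"
    have St0: "t0 \<in> S" using clB[OF k] t unfolding S_def J_def by auto
    have Sb: "bdd_above S" unfolding S_def by (intro bdd_aboveI[of _ t]) auto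
    define \<tau> where "\<tau> = Sup S"
    have \<tau>1: "t0 \<le> \<tau>" unfolding \<tau>_def using St0 Sb by (rule cSup_upper)
    have \<tau>2: "\<tau> \<le> t" unfolding \<tau>_def using St0 by (intro cSup_least) (auto simp: S_def)
    have x\<tau>: "x k \<tau> \<ge> 0"
    proof (rule ccontr)
      assume "\<not> ?thesis"
      hence "x k \<tau> < 0" by simp
      moreover have "0 \<le> \<tau>" using \<tau>1 t00 by simp
      ultimately obtain d where d: "d > 0" "\<forall>u\<ge>0. \<bar>u - \<tau>\<bar> < d \<longrightarrow> x k u < 0"
        using neg_nbhd[OF cont[OF k]] by blast
      obtain u where u: "u \<in> S" "\<tau> - d < u" using less_cSupD[of S "\<tau> - d"] St0 d by (auto simp: \<tau>_def)
      have "u \<le> \<tau>" unfolding \<tau>_def using u(1) Sb by (rule cSup_upper)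
      moreover have "0 \<le> u" "x k u \<ge> 0" using u(1) t00 unfolding S_def by auto
      ultimately have "x k u < 0" using u(2) d by auto
      thus False using \<open>x k u \<ge> 0\<close> by simp
    qed
    have \<tau>t: "\<tau> < t"
    proof (rule ccontr)
      assume "\<not> \<tau> < t"
      hence "\<tau> = t" using \<tau>2 by simp
      thus False using x\<tau> neg by simp
    qed
    have negs: "x k u < 0" if "\<tau> < u" "u \<le> t" for u
    proof (rule ccontr)
      assume "\<not> ?thesis"
      hence "u \<in> S" using that \<tau>1 unfolding S_def by auto
      hence "u \<le> \<tau>" unfolding \<tau>_def using Sb by (rule cSup_upper)
      thus False using that by simp
    qed
    obtain z where z: "\<tau> < z" "z < t" "x k t - x k \<tau> = (t - \<tau>) * x' k z"
      using mvt0[of \<tau> t "x k" "x' k"] \<tau>1 t00 \<tau>t der k by force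
    have zJ: "z \<in> J" using z \<tau>1 t unfolding J_def by auto
    have z0: "0 \<le> z" "z \<le> T" using z \<tau>1 t00 t hT unfolding J_def by auto
    have xz: "x k z < 0" using negs[of z] z by simp
    have "x' k z \<ge> - L * m z"
      using L(2)[rule_format, OF z0, rule_format, OF k xz] unfolding m_def by simp
    moreover have "m z \<le> Mx" using tm zJ unfolding Mx_def by auto
    hence "L * m z \<le> L * Mx" using L(1) by (rule mult_left_mono)
    ultimately have "x' k z \<ge> - (L * Mx)" by simp
    hence "(t - \<tau>) * x' k z \<ge> (t - \<tau>) * (- (L * Mx))" using \<tau>t by (intro mult_left_mono) auto
    moreover have "(t - \<tau>) * (L * Mx) \<le> h * (L * Mx)"
      using t \<tau>1 L(1) Mx0 unfolding J_def by (intro mult_right_mono) auto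
    ultimately show ?thesis using z(3) x\<tau> by (simp add: algebra_simps)
  qed
  have mJ: "m t \<le> c * (L * h * Mx)" if t: "t \<in> J" for t
    unfolding m_def c_def
  proof (rule sum_bounded_above)
    fix l assume "l \<in> I"
    thus "max 0 (- x l t) \<le> L * h * Mx"
      using core[OF t, of l] L(1) h0 Mx0 by (cases "x l t < 0") auto
  qed
  have "Mx \<le> c * L * h * Mx" using mJ[OF tm(1)] unfolding Mx_def by (simp add: mult.assoc)
  also have "\<dots> \<le> (1/2) * Mx" using chL Mx0 by (rule mult_right_mono)
  finally have Mx00: "Mx = 0" using Mx0 by simp
  have allJ: "x k t \<ge> 0" if "t \<in> J" "k \<in> I" for t k
  proof -
    have "max 0 (- x k t) \<le> m t" unfolding m_def using that fin by (intro member_le_sum) auto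
    also have "\<dots> \<le> 0" using tm that Mx00 unfolding Mx_def by auto
    finally show ?thesis by simp
  qed
  have "t0 + h \<in> G" unfolding G_def
  proof (intro CollectI conjI allI impI)
    fix w assume w: "0 \<le> w \<and> w \<le> t0 + h"
    show "\<forall>k\<in>I. 0 \<le> x k w"
    proof (cases "w < t0")
      case True thus ?thesis using clA w by auto
    next
      case False thus ?thesis using allJ w unfolding J_def by auto
    qed
  qed (use t00 h0 hT in auto)
  hence "t0 + h \<le> t0" unfolding t0_def using Gb by (rule cSup_upper)
  thus False using h0 by simp
qed



lemma prod_lb:
  fixes x y B m1 m2 :: real
  assumes "\<bar>x\<bar> \<le> B" "\<bar>y\<bar> \<le> B" "x \<ge> - m1" "y \<ge> - m2" "m1 \<ge> 0" "m2 \<ge> 0"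
  shows "x * y \<ge> - B * (m1 + m2)"
proof (cases "x \<ge> 0")
  case True
  show ?thesis
  proof (cases "y \<ge> 0")
    case True
    have "0 \<le> x * y" using \<open>x \<ge> 0\<close> True by simp
    moreover have "0 \<le> B * (m1 + m2)" using assms by (smt (verit) mult_nonneg_nonneg)
    ultimately show ?thesis by linarith
  next
    case False
    have "x * y \<ge> x * (- m2)" using assms(4) \<open>x \<ge> 0\<close> by (rule mult_left_mono)
    moreover have "x * m2 \<le> B * m2" using assms by (intro mult_right_mono) auto
    moreover have "B * m1 \<ge> 0" using assms by (smt (verit) mult_nonneg_nonneg)
    ultimately show ?thesis by (simp add: algebra_simps)
  qed
next
  case False
  show ?thesis
  proof (cases "y \<ge> 0")
    case True
    have "x * y \<ge> (- m1) * y" using assms(3) \<open>y \<ge> 0\<close> by (rule mult_right_mono)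
    moreover have "y * m1 \<le> B * m1" using assms True by (intro mult_right_mono) auto
    moreover have "B * m2 \<ge> 0" using assms by (smt (verit) mult_nonneg_nonneg)
    ultimately show ?thesis by (simp add: algebra_simps)
  next
    case False
    have "0 \<le> x * y" using \<open>\<not> x \<ge> 0\<close> False by (simp add: zero_le_mult_iff)
    moreover have "0 \<le> B * (m1 + m2)" using assms by (smt (verit) mult_nonneg_nonneg)
    ultimately show ?thesis by linarith
  qed
qed

lemma comp_bounds:
  fixes P Q Bv m Bg n b0 ba ka de :: real
  assumes bd: "\<bar>P\<bar> \<le> Bg" "\<bar>Q\<bar> \<le> Bg" "\<bar>1 - P - Q\<bar> \<le> Bg" "\<bar>Bv\<bar> \<le> Bg"
    and lb: "P \<ge> - m" "Q \<ge> - m" "1 - P - Q \<ge> - m" "Bv \<ge> - (n * m)"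
    and m: "m \<ge> 0" "n \<ge> 0" and par: "b0 \<ge> 0" "ba \<ge> 0" "ka \<ge> 0" "de \<ge> 0"
  shows "P < 0 \<Longrightarrow> b0 * (1 - P - Q) * Bv + ba * Q * Bv - de * P \<ge> - (((b0+ba+ka)*Bg*(n+1) + de) * m)"
    and "Q < 0 \<Longrightarrow> ka * (1 - P - Q) * Bv - ba * Q * Bv \<ge> - (((b0+ba+ka)*Bg*(n+1) + de) * m)"
    and "1 - P - Q < 0 \<Longrightarrow> - (b0 * (1 - P - Q) * Bv + ba * Q * Bv - de * P)
            - (ka * (1 - P - Q) * Bv - ba * Q * Bv) \<ge> - (((b0+ba+ka)*Bg*(n+1) + de) * m)"
proof -
  define W where "W = Bg * (m + n * m)"
  have nm: "n * m \<ge> 0" using m by simp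
  have Bg0: "Bg \<ge> 0" using bd(1) by simp
  have W0: "W \<ge> 0" unfolding W_def using Bg0 m nm by simp
  have W': "W = Bg * (n + 1) * m" unfolding W_def by (simp add: algebra_simps)
  have sb: "(1 - P - Q) * Bv \<ge> - W" unfolding W_def using prod_lb[OF bd(3,4) lb(3,4) m(1) nm] by simp
  have qb: "Q * Bv \<ge> - W" unfolding W_def using prod_lb[OF bd(2,4) lb(2,4) m(1) nm] by simp
  have Wn: "Bg * (0 + n * m) \<le> W" unfolding W_def using Bg0 m by (intro mult_left_mono) auto
  have L: "((b0+ba+ka)*Bg*(n+1) + de) * m = b0 * W + ba * W + ka * W + de * m"
    unfolding W' by (simp add: algebra_simps)
  have p1: "b0 * ((1 - P - Q) * Bv) \<ge> b0 * (- W)" using sb par by (intro mult_left_mono) auto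
  have p2: "ba * (Q * Bv) \<ge> ba * (- W)" using qb par by (intro mult_left_mono) auto
  have p3: "ka * ((1 - P - Q) * Bv) \<ge> ka * (- W)" using sb par by (intro mult_left_mono) auto
  have kW: "ka * W \<ge> 0" "b0 * W \<ge> 0" "ba * W \<ge> 0" "de * m \<ge> 0" using par W0 m by auto
  show "P < 0 \<Longrightarrow> b0 * (1 - P - Q) * Bv + ba * Q * Bv - de * P \<ge> - (((b0+ba+ka)*Bg*(n+1) + de) * m)"
  proof -
    assume P: "P < 0"
    have "de * P \<le> 0" using P par by (simp add: mult_nonneg_nonpos)
    thus ?thesis unfolding L using p1 p2 kW by (simp add: algebra_simps)
  qed
  show "Q < 0 \<Longrightarrow> ka * (1 - P - Q) * Bv - ba * Q * Bv \<ge> - (((b0+ba+ka)*Bg*(n+1) + de) * m)"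
  proof -
    assume Q: "Q < 0"
    have "(- Q) * Bv \<ge> - (Bg * (0 + n * m))"
      using prod_lb[of "- Q" Bg Bv 0 "n * m"] bd(2,4) Q lb(4) nm by auto
    hence "(- Q) * Bv \<ge> - W" using Wn by linarith
    hence "ba * ((- Q) * Bv) \<ge> ba * (- W)" using par by (intro mult_left_mono) auto
    thus ?thesis unfolding L using p3 kW by (simp add: algebra_simps)
  qed
  show "1 - P - Q < 0 \<Longrightarrow> - (b0 * (1 - P - Q) * Bv + ba * Q * Bv - de * P)
            - (ka * (1 - P - Q) * Bv - ba * Q * Bv) \<ge> - (((b0+ba+ka)*Bg*(n+1) + de) * m)"
  proof -
    assume S: "1 - P - Q < 0"
    have "(- (1 - P - Q)) * Bv \<ge> - (Bg * (0 + n * m))"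
      using prod_lb[of "- (1 - P - Q)" Bg Bv 0 "n * m"] bd(3,4) S lb(4) nm by auto
    hence s1: "(- (1 - P - Q)) * Bv \<ge> - W" using Wn by linarith
    have "b0 * ((- (1 - P - Q)) * Bv) \<ge> b0 * (- W)" using s1 par by (intro mult_left_mono) auto
    moreover have "ka * ((- (1 - P - Q)) * Bv) \<ge> ka * (- W)" using s1 par by (intro mult_left_mono) auto
    moreover have "de * P \<ge> de * (- m)" using lb(1) par by (intro mult_left_mono) auto
    ultimately show ?thesis unfolding L using kW by (simp add: algebra_simps)
  qed
qed



theorem theorem2:
  fixes N :: nat and A :: "real mat"
    and beta0 betaa kappa delta :: real
    and p q :: "real \<Rightarrow> nat \<Rightarrow> real"
  assumes adj: "adjacency_matrix N A"
    and par: "beta0 > 0" "delta > 0" "kappa > 0" "0 \<le> betaa" "betaa < beta0"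
    and init: "\<forall>i<N. p 0 i \<ge> 0 \<and> q 0 i \<ge> 0 \<and> p 0 i + q 0 i \<le> 1"
    and ode_p: "\<forall>i<N. \<forall>t\<ge>0. ((\<lambda>s. p s i) has_real_derivative
        (beta0 * (1 - p t i - q t i) * (\<Sum>j<N. A $$ (i,j) * p t j)
         + betaa * q t i * (\<Sum>j<N. A $$ (i,j) * p t j) - delta * p t i)) (at t within {0..})"
    and ode_q: "\<forall>i<N. \<forall>t\<ge>0. ((\<lambda>s. q s i) has_real_derivative
        (kappa * (1 - p t i - q t i) * (\<Sum>j<N. A $$ (i,j) * p t j)
         - betaa * q t i * (\<Sum>j<N. A $$ (i,j) * p t j))) (at t within {0..})"
    and tau: "(beta0 / delta) * rho A < 1"
  shows "\<forall>i<N. \<exists>C \<alpha>. \<alpha> > 0 \<and> (\<forall>t\<ge>0. \<bar>p t i\<bar> \<le> C * exp (- \<alpha> * t))"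
proof (cases "N = 0")
  case True thus ?thesis by simp
next
  case False
  hence N0: "N > 0" by simp
  have Acar: "A \<in> carrier_mat N N" and A01: "\<And>i j. i<N \<Longrightarrow> j<N \<Longrightarrow> A $$ (i,j) = 0 \<or> A $$ (i,j) = 1"
    using adj unfolding adjacency_matrix_def by auto
  have Ann: "\<And>i j. i<N \<Longrightarrow> j<N \<Longrightarrow> A $$ (i,j) \<ge> 0" using A01 by force
  have Ale: "\<And>i j. i<N \<Longrightarrow> j<N \<Longrightarrow> A $$ (i,j) \<le> 1" using A01 by force
  define b where "b t i = (\<Sum>j<N. A $$ (i,j) * p t j)" for t i
  define dp where "dp t i = beta0 * (1 - p t i - q t i) * b t i + betaa * q t i * b t i - delta * p t i" for t i
  define dq where "dq t i = kappa * (1 - p t i - q t i) * b t i - betaa * q t i * b t i" for t i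
  have Dp: "\<And>i t. i < N \<Longrightarrow> t \<ge> 0 \<Longrightarrow> ((\<lambda>s. p s i) has_real_derivative dp t i) (at t within {0..})"
    using ode_p unfolding dp_def b_def by blast
  have Dq: "\<And>i t. i < N \<Longrightarrow> t \<ge> 0 \<Longrightarrow> ((\<lambda>s. q s i) has_real_derivative dq t i) (at t within {0..})"
    using ode_q unfolding dq_def b_def by blast
  have contp: "continuous_on {0..} (\<lambda>s. p s i)" if "i < N" for i
    using Dp[OF that] by (intro DERIV_continuous_on) auto
  have contq: "continuous_on {0..} (\<lambda>s. q s i)" if "i < N" for i
    using Dq[OF that] by (intro DERIV_continuous_on) auto
  define I where "I = {..<N} \<times> {..<(3::nat)}"
  define X where "X k t = (if snd k = 0 then p t (fst k) else if snd k = 1 then q t (fst k)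
                           else 1 - p t (fst k) - q t (fst k))" for k :: "nat \<times> nat" and t :: real
  define X' where "X' k t = (if snd k = 0 then dp t (fst k) else if snd k = 1 then dq t (fst k)
                           else - dp t (fst k) - dq t (fst k))" for k :: "nat \<times> nat" and t :: real
  have inv: "\<forall>k\<in>I. \<forall>t\<ge>0. X k t \<ge> 0"
  proof (rule nonneg_invariant)
    show "finite I" unfolding I_def by simp
    show "\<forall>k\<in>I. \<forall>t\<ge>0. (X k has_real_derivative X' k t) (at t within {0..})"
    proof (intro ballI allI impI)
      fix k t assume k: "k \<in> I" and t: "(t::real) \<ge> 0"
      obtain i c where kic: "k = (i, c)" "i < N" "c < 3" using k unfolding I_def by auto
      consider "c = 0" | "c = 1" | "c = 2" using kic by linarith
      thus "(X k has_real_derivative X' k t) (at t within {0..})"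
      proof cases
        case 1
        have "X k = (\<lambda>s. p s i)" unfolding X_def kic 1 by auto
        thus ?thesis using Dp[OF kic(2) t] unfolding X'_def kic 1 by simp
      next
        case 2
        have "X k = (\<lambda>s. q s i)" unfolding X_def kic 2 by auto
        thus ?thesis using Dq[OF kic(2) t] unfolding X'_def kic 2 by simp
      next
        case 3
        have "X k = (\<lambda>s. 1 - p s i - q s i)" unfolding X_def kic 3 by auto
        moreover have "((\<lambda>s. 1 - p s i - q s i) has_real_derivative 0 - dp t i - dq t i) (at t within {0..})"
          by (intro DERIV_diff DERIV_const Dp[OF kic(2) t] Dq[OF kic(2) t])
        ultimately show ?thesis unfolding X'_def kic 3 by simp
      qed
    qed
    show "\<forall>k\<in>I. X k 0 \<ge> 0" using init unfolding I_def X_def by auto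
    show "\<forall>T\<ge>0. \<exists>L\<ge>0. \<forall>t. 0 \<le> t \<longrightarrow> t \<le> T \<longrightarrow>
               (\<forall>k\<in>I. X k t < 0 \<longrightarrow> X' k t \<ge> - L * (\<Sum>l\<in>I. max 0 (- X l t)))"
    proof (intro allI impI)
      fix T :: real assume T: "T \<ge> 0"
      define F where "F t = (\<Sum>i<N. \<bar>p t i\<bar> + \<bar>q t i\<bar>)" for t :: real
      have "continuous_on {0..T} F" unfolding F_def
      proof (intro continuous_intros)
        fix i assume i: "i \<in> {..<N}"
        show "continuous_on {0..T} (\<lambda>s. p s i)" by (rule continuous_on_subset[OF contp]) (use i in auto)
        show "continuous_on {0..T} (\<lambda>s. q s i)" by (rule continuous_on_subset[OF contq]) (use i in auto)
      qed
      then obtain tB where tB: "tB \<in> {0..T}" "\<forall>t\<in>{0..T}. F t \<le> F tB"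
        using continuous_attains_sup[of "{0..T}" F] T by auto
      define B where "B = F tB"
      have B0: "B \<ge> 0" unfolding B_def F_def by (intro sum_nonneg) auto
      have pB: "\<bar>p t i\<bar> \<le> B" "\<bar>q t i\<bar> \<le> B" if "0 \<le> t" "t \<le> T" "i < N" for t i
      proof -
        have "\<bar>p t i\<bar> + \<bar>q t i\<bar> \<le> F t" unfolding F_def using that
          by (intro member_le_sum[of i "{..<N}" "\<lambda>i. \<bar>p t i\<bar> + \<bar>q t i\<bar>"]) auto
        also have "\<dots> \<le> B" using tB that unfolding B_def by auto
        finally show "\<bar>p t i\<bar> \<le> B" "\<bar>q t i\<bar> \<le> B" by auto
      qed
      define Bg where "Bg = 1 + 2 * B + N * B"
      define L where "L = (beta0+betaa+kappa)*Bg*(real N+1) + delta"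
      have L0: "L \<ge> 0" unfolding L_def Bg_def using par B0 by (intro add_nonneg_nonneg mult_nonneg_nonneg) auto
      show "\<exists>L\<ge>0. \<forall>t. 0 \<le> t \<longrightarrow> t \<le> T \<longrightarrow>
               (\<forall>k\<in>I. X k t < 0 \<longrightarrow> X' k t \<ge> - L * (\<Sum>l\<in>I. max 0 (- X l t)))"
      proof (intro exI[of _ L] conjI allI impI ballI)
        fix t k assume t: "0 \<le> t" "t \<le> T" and k: "k \<in> I" and neg: "X k t < 0"
        define m where "m = (\<Sum>l\<in>I. max 0 (- X l t))"
        have m0: "m \<ge> 0" unfolding m_def by (intro sum_nonneg) auto
        have mle: "max 0 (- X l t) \<le> m" if "l \<in> I" for l
          unfolding m_def using that by (intro member_le_sum) (auto simp: I_def)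
        have plb: "p t i \<ge> - m" "q t i \<ge> - m" "1 - p t i - q t i \<ge> - m" if "i < N" for i
        proof -
          have "(i,0) \<in> I" "(i,1) \<in> I" "(i,2) \<in> I" using that unfolding I_def by auto
          from mle[OF this(1)] mle[OF this(2)] mle[OF this(3)]
          show "p t i \<ge> - m" "q t i \<ge> - m" "1 - p t i - q t i \<ge> - m" unfolding X_def by auto
        qed
        have blb: "b t i \<ge> - (real N * m)" if "i < N" for i
        proof -
          have "(\<Sum>j<N. A $$ (i,j) * p t j) \<ge> (\<Sum>j<N. - m)"
          proof (intro sum_mono)
            fix j assume "j \<in> {..<N}"
            hence j: "j < N" by simp
            show "- m \<le> A $$ (i,j) * p t j" using A01[OF that j] plb(1)[OF j] m0 by auto
          qed
          thus ?thesis unfolding b_def by simp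
        qed
        have bub: "\<bar>b t i\<bar> \<le> real N * B" if "i < N" for i
        proof -
          have "\<bar>b t i\<bar> \<le> (\<Sum>j<N. \<bar>A $$ (i,j) * p t j\<bar>)" unfolding b_def by (rule sum_abs)
          also have "\<dots> \<le> (\<Sum>j<N. B)"
          proof (intro sum_mono)
            fix j assume "j \<in> {..<N}"
            hence j: "j < N" by simp
            show "\<bar>A $$ (i,j) * p t j\<bar> \<le> B" using A01[OF that j] pB(1)[OF t j] B0 by auto
          qed
          finally show ?thesis by simp
        qed
        obtain i c where kic: "k = (i, c)" "i < N" "c < 3" using k unfolding I_def by auto
        have NB: "real N * B \<ge> 0" using B0 by simp
        have bd: "\<bar>p t i\<bar> \<le> Bg" "\<bar>q t i\<bar> \<le> Bg" "\<bar>1 - p t i - q t i\<bar> \<le> Bg" "\<bar>b t i\<bar> \<le> Bg"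
          using pB[OF t kic(2)] bub[OF kic(2)] B0 NB unfolding Bg_def by auto
        note cb = comp_bounds[OF bd plb[OF kic(2)] blb[OF kic(2)] m0 _ _ _ _ _, of beta0 betaa kappa delta]
        have pars: "real N \<ge> 0" "beta0 \<ge> 0" "betaa \<ge> 0" "kappa \<ge> 0" "delta \<ge> 0" using par by auto
        consider "c = 0" | "c = 1" | "c = 2" using kic by linarith
        hence "X' k t \<ge> - (L * m)"
        proof cases
          case 1 thus ?thesis using cb(1)[OF pars] neg unfolding X_def X'_def L_def dp_def kic by simp
        next
          case 2 thus ?thesis using cb(2)[OF pars] neg unfolding X_def X'_def L_def dq_def kic by simp
        next
          case 3 thus ?thesis using cb(3)[OF pars] neg unfolding X_def X'_def L_def dp_def dq_def kic by simp
        qed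
        thus "X' k t \<ge> - L * (\<Sum>l\<in>I. max 0 (- X l t))" unfolding m_def by simp
      qed (rule L0)
    qed
  qed
  have pnn: "p t i \<ge> 0" "q t i \<ge> 0" "p t i + q t i \<le> 1" if "t \<ge> 0" "i < N" for t i
  proof -
    have "(i,0) \<in> I" "(i,1) \<in> I" "(i,2) \<in> I" using that unfolding I_def by auto
    thus "p t i \<ge> 0" "q t i \<ge> 0" "p t i + q t i \<le> 1" using inv that unfolding X_def by force+
  qed
  have rho0: "rho A \<ge> 0"
  proof -
    have "rho A \<in> norm ` spectrum (map_mat complex_of_real A)"
      unfolding rho_def by (rule spectral_radius_mem_max(1)[OF _ N0]) (use Acar in auto)
    thus ?thesis by auto
  qed
  define g where "g = delta / beta0"
  have rg: "rho A < g" using tau par unfolding g_def by (simp add: field_simps)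
  define s' where "s' = rho A + (g - rho A) / 3"
  define s where "s = rho A + 2 * (g - rho A) / 3"
  have ss: "rho A < s'" "s' < s" "0 < s'" "s < g" unfolding s'_def s_def using rg rho0 by (auto simp: field_simps)
  obtain v where v1: "\<forall>j<N. v j \<ge> 1" and vA: "\<forall>j<N. (\<Sum>i<N. v i * A $$ (i,j)) \<le> s * v j"
    using lyap_vec[OF adj N0 ss(1) ss(2) ss(3)] by blast
  define \<alpha> where "\<alpha> = delta - beta0 * s"
  have \<alpha>0: "\<alpha> > 0" using ss(4) par unfolding \<alpha>_def g_def by (simp add: field_simps)
  define V where "V t = (\<Sum>i<N. v i * p t i)" for t
  define V' where "V' t = (\<Sum>i<N. v i * dp t i)" for t
  have DV: "(V has_real_derivative V' t) (at t within {0..})" if "t \<ge> 0" for t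
    unfolding V_def V'_def
    by (intro DERIV_sum DERIV_cmult Dp that) auto
  have V'le: "V' t \<le> - \<alpha> * V t" if t: "t \<ge> 0" for t
  proof -
    have b0: "b t i \<ge> 0" if "i < N" for i
      unfolding b_def using Ann[OF that] pnn(1)[OF t] by (intro sum_nonneg mult_nonneg_nonneg) auto
    have "V' t \<le> (\<Sum>i<N. v i * (beta0 * b t i - delta * p t i))"
      unfolding V'_def
    proof (intro sum_mono mult_left_mono)
      fix i assume "i \<in> {..<N}"
      hence i: "i < N" by simp
      show "0 \<le> v i" using v1 i by force
      have "beta0 * (1 - p t i - q t i) + betaa * q t i \<le> beta0"
      proof -
        have "betaa * q t i \<le> beta0 * q t i" using par pnn(2)[OF t i] by (intro mult_right_mono) auto
        moreover have "beta0 * p t i \<ge> 0" using par pnn(1)[OF t i] by simp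
        ultimately show ?thesis by (simp add: algebra_simps)
      qed
      hence "(beta0 * (1 - p t i - q t i) + betaa * q t i) * b t i \<le> beta0 * b t i"
        using b0[OF i] by (intro mult_right_mono) auto
      thus "dp t i \<le> beta0 * b t i - delta * p t i" unfolding dp_def by (simp add: algebra_simps)
    qed
    also have "\<dots> = beta0 * (\<Sum>j<N. (\<Sum>i<N. v i * A $$ (i,j)) * p t j) - delta * V t"
    proof -
      have "(\<Sum>i<N. v i * b t i) = (\<Sum>i<N. \<Sum>j<N. v i * A $$ (i,j) * p t j)"
        unfolding b_def by (simp add: sum_distrib_left mult.assoc)
      also have "\<dots> = (\<Sum>j<N. \<Sum>i<N. v i * A $$ (i,j) * p t j)" by (rule sum.swap)
      also have "\<dots> = (\<Sum>j<N. (\<Sum>i<N. v i * A $$ (i,j)) * p t j)" by (simp add: sum_distrib_right)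
      finally have e: "(\<Sum>i<N. v i * b t i) = (\<Sum>j<N. (\<Sum>i<N. v i * A $$ (i,j)) * p t j)" .
      have "(\<Sum>i<N. v i * (beta0 * b t i - delta * p t i)) = beta0 * (\<Sum>i<N. v i * b t i) - delta * V t"
        unfolding V_def by (simp add: sum_subtractf sum_distrib_left algebra_simps)
      thus ?thesis using e by simp
    qed
    also have "\<dots> \<le> beta0 * (\<Sum>j<N. s * v j * p t j) - delta * V t"
    proof -
      have "(\<Sum>j<N. (\<Sum>i<N. v i * A $$ (i,j)) * p t j) \<le> (\<Sum>j<N. s * v j * p t j)"
        using vA pnn(1)[OF t] by (intro sum_mono mult_right_mono) auto
      thus ?thesis using par by simp
    qed
    also have "\<dots> = - \<alpha> * V t"
    proof -
      have "(\<Sum>j<N. s * v j * p t j) = s * V t" unfolding V_def by (simp add: sum_distrib_left mult.assoc)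
      thus ?thesis unfolding \<alpha>_def by (simp add: algebra_simps)
    qed
    finally show ?thesis .
  qed
  define W where "W t = V t * exp (\<alpha> * t)" for t
  define W' where "W' t = V' t * exp (\<alpha> * t) + V t * (exp (\<alpha> * t) * \<alpha>)" for t
  have DW: "\<forall>t\<ge>0. (W has_real_derivative W' t) (at t within {0..})"
  proof (intro allI impI)
    fix t :: real assume t: "t \<ge> 0"
    have de: "((\<lambda>t. exp (\<alpha> * t)) has_real_derivative exp (\<alpha> * t) * \<alpha>) (at t within {0..})"
      by (auto intro!: derivative_eq_intros)
    show "(W has_real_derivative W' t) (at t within {0..})"
      unfolding W_def W'_def using DERIV_mult[OF DV[OF t] de] by (simp add: algebra_simps)
  qed
  have W'le: "W' t \<le> 0" if "t \<ge> 0" for t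
  proof -
    have "W' t = (V' t + \<alpha> * V t) * exp (\<alpha> * t)" unfolding W'_def by (simp add: algebra_simps)
    moreover have "V' t + \<alpha> * V t \<le> 0" using V'le[OF that] by simp
    ultimately show ?thesis by (simp add: mult_nonpos_nonneg)
  qed
  have Wdec: "W t \<le> W 0" if t: "t \<ge> 0" for t
  proof (cases "t = 0")
    case True thus ?thesis by simp
  next
    case False
    hence "0 < t" using t by simp
    then obtain z where z: "0 < z" "z < t" "W t - W 0 = (t - 0) * W' z"
      using mvt0[of 0 t W W'] DW by auto
    have "(t - 0) * W' z \<le> 0" using W'le[of z] z t by (simp add: mult_nonneg_nonpos)
    thus ?thesis using z by simp
  qed
  show ?thesis
  proof (intro allI impI)
    fix i assume i: "i < N"
    have "\<forall>t\<ge>0. \<bar>p t i\<bar> \<le> V 0 * exp (- \<alpha> * t)"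
    proof (intro allI impI)
    fix t :: real assume t: "t \<ge> 0"
    have "V t * exp (\<alpha> * t) \<le> V 0" using Wdec[OF t] unfolding W_def by simp
    hence Vt: "V t \<le> V 0 * exp (- \<alpha> * t)"
      by (simp add: exp_minus field_simps)
    have "p t i \<le> v i * p t i" using v1 i pnn(1)[OF t i] by (simp add: mult_le_cancel_right1)
    also have "\<dots> \<le> V t" unfolding V_def using i v1 pnn(1)[OF t]
    proof (intro member_le_sum[of i "{..<N}" "\<lambda>i. v i * p t i"])
      fix j assume "j \<in> {..<N} - {i}"
      hence j: "j < N" by simp
      have "v j \<ge> 0" using v1 j by force
      thus "0 \<le> v j * p t j" using pnn(1)[OF t j] by simp
    qed (use i in auto)
    finally show "\<bar>p t i\<bar> \<le> V 0 * exp (- \<alpha> * t)" using pnn(1)[OF t i] Vt by simp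
    qed
    thus "\<exists>C \<alpha>. \<alpha> > 0 \<and> (\<forall>t\<ge>0. \<bar>p t i\<bar> \<le> C * exp (- \<alpha> * t))" using \<alpha>0 by blast
  qed
qed

end
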